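(* Let $n\ge 2$ and $\alpha\in\mathbb{Z}_2^n$. Then $$\max_{\beta,\gamma\in\mathbb{Z}_2^n}\mathrm{adp}^{\mathrm{XR}}_1(\alpha,\beta\to\gamma)=\mathrm{adp}^{\mathrm{XR}}_1(\alpha,\alpha\to 0).$$
   Context: For $x\in\mathbb{Z}_2^n$ write $x=(x_0,\dots,x_{n-1})$ and identify $x$ with the integer $\sum_{i=0}^{n-1}x_i2^{n-1-i}$, so $x_0$ is the most significant bit; $x+y$, $x-y$ and $-x$ are computed modulo $2^n$. $\oplus$ is bitwise XOR and $x\lll r=(x_r,\dots,x_{n-1},x_0,\dots,x_{r-1})$. For $f:(\mathbb{Z}_2^n)^k\to\mathbb{Z}_2^n$ the additive differential probability is $\mathrm{adp}^f(\alpha_1,\dots,\alpha_k\to\alpha_{k+1})=2^{-kn}\#\{(x_1,\dots,x_k)\in(\mathbb{Z}_2^n)^k: f(x_1+\alpha_1,\dots,x_k+\alpha_k)=f(x_1,\dots,x_k)+\alpha_{k+1}\}$. For $1\le r\le n-1$, $\mathrm{adp}^{\mathrm{XR}}_r$ denotes $\mathrm{adp}^f$ for $f(x,y)=(x\oplus y)\lll r$. *)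

theory Defs
  imports Main "HOL.Real"
begin

text \<open>Elements of Z_2^n are identified with naturals in {0..<2^n}: the bit vector
(x_0,...,x_{n-1}) corresponds to sum x_i 2^(n-1-i), so x_0 is the most significant bit.\<close>

definition words :: "nat \<Rightarrow> nat set" where
  "words n = {..<2^n}"

definition addm :: "nat \<Rightarrow> nat \<Rightarrow> nat \<Rightarrow> nat" where
  "addm n x y = (x + y) mod 2^n"

text \<open>Left rotation by r of an n-bit word: (x_0..x_{n-1}) goes to (x_r..x_{n-1},x_0..x_{r-1}).\<close>
definition rotl :: "nat \<Rightarrow> nat \<Rightarrow> nat \<Rightarrow> nat" where
  "rotl n r x = (x * 2^r + x div 2^(n - r)) mod 2^n"

definition adp2 :: "nat \<Rightarrow> (nat \<Rightarrow> nat \<Rightarrow> nat) \<Rightarrow> nat \<Rightarrow> nat \<Rightarrow> nat \<Rightarrow> real" where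
  "adp2 n f a1 a2 a3 =
     real (card {(x, y). x \<in> words n \<and> y \<in> words n \<and>
        f (addm n x a1) (addm n y a2) = addm n (f x y) a3}) / 2 ^ (2 * n)"

definition XR :: "nat \<Rightarrow> nat \<Rightarrow> nat \<Rightarrow> nat \<Rightarrow> nat" where
  "XR n r x y = rotl n r (Bit_Operations.xor x y)"

definition adpXR :: "nat \<Rightarrow> nat \<Rightarrow> nat \<Rightarrow> nat \<Rightarrow> nat \<Rightarrow> real" where
  "adpXR n r a b c = adp2 n (XR n r) a b c"

end

theory Submission
  imports Defs
begin

unbundle bit_operations_syntax

lemma xor_div2: "((X::nat) XOR Y) div 2 = X div 2 XOR Y div 2"
  by (subst xor_nat_rec) simp
lemma xor_mod2: "((X::nat) XOR Y) mod 2 = of_bool (odd X \<noteq> odd Y)"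
  by (subst xor_nat_rec) simp

lemma two_rep_eq: "(r::nat) < 2 \<Longrightarrow> s < 2 \<Longrightarrow> (a*2 + r = b*2 + s) \<longleftrightarrow> a = b \<and> r = s"
  by presburger

lemma P_Suc:
  fixes X Y Z :: nat
  shows "(take_bit (Suc k) (X XOR Y) = take_bit (Suc k) Z \<and> bit (X XOR Y) (Suc k) = f) \<longleftrightarrow>
     (even (X + Y + Z) \<and> take_bit k (X div 2 XOR Y div 2) = take_bit k (Z div 2) \<and> bit (X div 2 XOR Y div 2) k = f)"
proof -
  have "take_bit (Suc k) (X XOR Y) = take_bit (Suc k) Z \<longleftrightarrow>
     (take_bit k (X div 2 XOR Y div 2) = take_bit k (Z div 2) \<and> (X XOR Y) mod 2 = Z mod 2)"
    unfolding take_bit_Suc xor_div2 by (rule two_rep_eq) auto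
  moreover have "(X XOR Y) mod 2 = Z mod 2 \<longleftrightarrow> even (X + Y + Z)"
    unfolding xor_mod2 by (auto simp: mod2_eq_if)
  ultimately show ?thesis by (auto simp: bit_Suc xor_div2)
qed

definition cS :: "nat \<Rightarrow> nat \<Rightarrow> nat \<Rightarrow> nat \<Rightarrow> nat \<Rightarrow> nat \<Rightarrow> nat \<Rightarrow> bool \<Rightarrow> (nat \<times> nat) set" where
"cS k a b D c d e f = {(x,y). x < 2^k \<and> y < 2^k \<and>
   take_bit k ((x+a+c) XOR (y+b+d)) = take_bit k ((x XOR y)+D+e) \<and> bit ((x+a+c) XOR (y+b+d)) k = f}"

lemma odd_xor_nat: "odd ((x::nat) XOR y) \<longleftrightarrow> (odd x \<noteq> odd y)"
  by (subst xor_nat_rec) simp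

lemma cS_finite: "finite (cS k a b D c d e f)"
  by (rule finite_subset[of _ "{..<2^k} \<times> {..<2^k}"]) (auto simp: cS_def)

lemma cS_0: "card (cS 0 a b D c d e f) = of_bool ((odd (a+c) \<noteq> odd (b+d)) = f)"
proof -
  have "cS 0 a b D c d e f = (if (odd (a+c) \<noteq> odd (b+d)) = f then {(0,0)} else {})"
    by (auto simp: cS_def bit_0 odd_xor_nat)
  then show ?thesis by simp
qed

lemma div2_sum: "((x::nat)+a+c) div 2 = x div 2 + a div 2 + (x mod 2 + a mod 2 + c) div 2"
  by presburger

lemma even_xor_nat: "even ((x::nat) XOR y) \<longleftrightarrow> (even x \<longleftrightarrow> even y)"
  using odd_xor_nat by blast

lemma even_xor_sum: "even ((x::nat) + y + (x XOR y))"
  by (auto simp: even_xor_nat)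

lemma cS_Suc_mem:
  "(x,y) \<in> cS (Suc k) a b D c d e f \<longleftrightarrow> even (a+b+c+d+D+e) \<and>
     (x div 2, y div 2) \<in> cS k (a div 2) (b div 2) (D div 2) ((x mod 2 + a mod 2 + c) div 2)
        ((y mod 2 + b mod 2 + d) div 2) (((x XOR y) mod 2 + D mod 2 + e) div 2) f"
proof -
  have ev: "even ((x+a+c) + (y+b+d) + ((x XOR y)+D+e)) \<longleftrightarrow> even (a+b+c+d+D+e)"
    using even_xor_sum[of x y] by (simp add: algebra_simps)
  have lt: "\<And>z::nat. z < 2^Suc k \<longleftrightarrow> z div 2 < 2^k" by auto
  have d1: "((x XOR y) + D + e) div 2 = (x div 2 XOR y div 2) + D div 2 + ((x XOR y) mod 2 + D mod 2 + e) div 2"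
    using div2_sum[of "x XOR y" D e] by (simp add: xor_div2)
  show ?thesis
    unfolding cS_def mem_Collect_eq prod.case P_Suc ev lt
    by (simp only: div2_sum[of x a c] div2_sum[of y b d] d1) blast
qed

lemma cS_Suc: "card (cS (Suc k) a b D c d e f) = (if even (a+b+c+d+D+e) then
   (\<Sum>p\<in>{0,1::nat}. \<Sum>q\<in>{0,1::nat}. card (cS k (a div 2) (b div 2) (D div 2) ((p + a mod 2 + c) div 2)
        ((q + b mod 2 + d) div 2) (((p XOR q) + D mod 2 + e) div 2) f)) else 0)"
proof (cases "even (a+b+c+d+D+e)")
  case False
  then have "cS (Suc k) a b D c d e f = {}" using cS_Suc_mem by auto
  then show ?thesis using False by simp
next
  case True
  define T where "T = (\<lambda>(p::nat,q::nat). cS k (a div 2) (b div 2) (D div 2) ((p + a mod 2 + c) div 2)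
        ((q + b mod 2 + d) div 2) (((p XOR q) + D mod 2 + e) div 2) f)"
  have xm: "(x XOR y) mod 2 = (x mod 2) XOR (y mod 2)" for x y :: nat
    by (auto simp: mod2_eq_if odd_xor_nat)
  have bij: "bij_betw (\<lambda>(x,y). ((x mod 2, y mod 2), (x div 2, y div 2))) (cS (Suc k) a b D c d e f)
     (Sigma ({0,1}\<times>{0,1}) T)"
  proof (rule bij_betw_byWitness[where f'="\<lambda>((p,q),(x,y)). (p + 2*x, q + 2*y)"])
    show "\<forall>z\<in>cS (Suc k) a b D c d e f. (\<lambda>((p,q),(x,y)). (p + 2*x, q + 2*y)) ((\<lambda>(x,y). ((x mod 2, y mod 2), (x div 2, y div 2))) z) = z"
      by auto
    show "\<forall>z\<in>Sigma ({0,1}\<times>{0,1}) T. (\<lambda>(x,y). ((x mod 2, y mod 2), (x div 2, y div 2))) ((\<lambda>((p,q),(x,y)). (p + 2*x, q + 2*y)) z) = z"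
      by auto
    show "(\<lambda>(x,y). ((x mod 2, y mod 2), (x div 2, y div 2))) ` cS (Suc k) a b D c d e f \<subseteq> Sigma ({0,1}\<times>{0,1}) T"
      using cS_Suc_mem by (auto simp: T_def xm)
    show "(\<lambda>((p,q),(x,y)). (p + 2*x, q + 2*y)) ` Sigma ({0,1}\<times>{0,1}) T \<subseteq> cS (Suc k) a b D c d e f"
    proof
      fix z assume "z \<in> (\<lambda>((p,q),(x,y)). (p + 2*x, q + 2*y)) ` Sigma ({0,1}\<times>{0,1}) T"
      then obtain p q x y where z: "z = (p + 2*x, q + 2*y)" and pq: "p \<in> {0,1}" "q \<in> {0,1}"
         and xy: "(x,y) \<in> T (p,q)" by auto
      have m: "(p + 2*x) mod 2 = p" "(p + 2*x) div 2 = x" "(q + 2*y) mod 2 = q" "(q + 2*y) div 2 = y" "p mod 2 = p" "q mod 2 = q"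
        using pq by auto
      show "z \<in> cS (Suc k) a b D c d e f"
        unfolding z cS_Suc_mem m using True xy by (simp add: T_def xm m)
    qed
  qed
  have "card (cS (Suc k) a b D c d e f) = card (Sigma ({0,1}\<times>{0,1}) T)"
    using bij_betw_same_card[OF bij] .
  also have "\<dots> = (\<Sum>z\<in>{0,1::nat}\<times>{0,1::nat}. card (T z))"
    by (rule card_SigmaI) (auto simp: T_def cS_finite)
  also have "\<dots> = (\<Sum>p\<in>{0,1::nat}. \<Sum>q\<in>{0,1::nat}. card (T (p,q)))"
    by (subst sum.cartesian_product) (simp add: case_prod_unfold)
  finally show ?thesis using True by (simp add: T_def)
qed

fun Bf :: "nat \<Rightarrow> nat \<Rightarrow> nat \<Rightarrow> nat" where
  "Bf 0 a s = 1"
| "Bf (Suc k) a s = (if a mod 2 = s then 4 * Bf k (a div 2) s else Bf k (a div 2) 0 + Bf k (a div 2) 1)"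

lemma xor01: "(0::nat) XOR 0 = 0" "(0::nat) XOR 1 = 1" "(1::nat) XOR 0 = 1" "(1::nat) XOR 1 = 0"
  by simp_all

lemma xor_le1: assumes "(p::nat) \<le> 1" "q \<le> 1" shows "p XOR q \<le> 1"
proof -
  have "p = 0 \<or> p = 1" "q = 0 \<or> q = 1" using assms by auto
  then show ?thesis by (auto simp: xor01)
qed

lemma cS_Suc_zero: "odd (a+b+c+d+D+e) \<Longrightarrow> card (cS (Suc k) a b D c d e f) = 0"
  by (simp add: cS_Suc)

lemma bit01: "(x::nat) \<le> 1 \<Longrightarrow> x = 0 \<or> x = 1" by auto

lemma par_lemma:
  fixes a0 b0 c d D0 e p :: nat
  assumes "b0 \<le> 1" "D0 \<le> 1" "a0 \<le> 1" "c \<le> 1" "d \<le> 1" "e \<le> 1" "p \<le> 1" "a0 \<noteq> c"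
    "even (a0+b0+c+d+D0+e)"
  shows "odd ((0 + b0 + d) div 2 + ((p XOR 0) + D0 + e) div 2 + ((1 + b0 + d) div 2 + ((p XOR 1) + D0 + e) div 2))"
proof -
  have x1: "p XOR 1 = 1 - p"
  proof -
    have "p = 0 \<or> p = 1" using assms(7) by auto
    then show ?thesis by auto
  qed
  have "b0 = 0 \<or> b0 = 1" "D0 = 0 \<or> D0 = 1" "a0 = 0 \<or> a0 = 1" "c = 0 \<or> c = 1" "d = 0 \<or> d = 1"
     "e = 0 \<or> e = 1" "p = 0 \<or> p = 1" using assms by auto
  then show ?thesis unfolding x1 using assms(8,9) by (elim disjE) simp_all
qed

lemma even_mod_lemma: "even ((a::nat)+b+c+d+D+e) \<Longrightarrow> even (a mod 2 + b mod 2 + c + d + D mod 2 + e)"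
  by presburger

lemma odd_split: "odd ((u0::nat) + v0 + (u1 + v1)) \<Longrightarrow> odd (A + B + p + u0 + DD + v0) \<or> odd (A + B + p + u1 + DD + v1)"
  by presburger

lemma cS_bound: "c \<le> 1 \<Longrightarrow> d \<le> 1 \<Longrightarrow> e \<le> 1 \<Longrightarrow> card (cS k a b D c d e f) \<le> Bf k a c"
proof (induction k arbitrary: a b D c d e)
  case 0
  then show ?case by (simp add: cS_0)
next
  case (Suc k)
  define T where "T = (\<lambda>p q. card (cS k (a div 2) (b div 2) (D div 2) ((p + a mod 2 + c) div 2)
        ((q + b mod 2 + d) div 2) (((p XOR q) + D mod 2 + e) div 2) f))"
  show ?case
  proof (cases "even (a+b+c+d+D+e)")
    case False
    then show ?thesis by (simp add: cS_Suc)
  next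
    case par: True
    have eq: "card (cS (Suc k) a b D c d e f) = T 0 0 + T 0 1 + T 1 0 + T 1 1"
      using par by (simp add: cS_Suc T_def)
    have b2: "b mod 2 \<le> 1" "D mod 2 \<le> 1" "a mod 2 \<le> 1" by auto
    have IHT: "T p q \<le> Bf k (a div 2) ((p + a mod 2 + c) div 2)" if "p \<le> 1" "q \<le> 1" for p q
    proof -
      have "p XOR q \<le> 1" using that by (rule xor_le1)
      then show ?thesis unfolding T_def
        by (intro Suc.IH) (use that Suc.prems b2 in auto)
    qed
    show ?thesis
    proof (cases "a mod 2 = c")
      case True
      have cc: "(p + a mod 2 + c) div 2 = c" if "p \<le> 1" for p
        using True that Suc.prems by auto
      have tt: "T p q \<le> Bf k (a div 2) c" if "p \<le> 1" "q \<le> 1" for p q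
        using IHT[OF that] cc[OF that(1)] by simp
      show ?thesis using eq True tt[of 0 0] tt[of 0 1] tt[of 1 0] tt[of 1 1] by simp
    next
      case False
      have cc: "(p + a mod 2 + c) div 2 = p" if "p \<le> 1" for p
        using False that Suc.prems b2 by auto
      show ?thesis
      proof (cases k)
        case 0
        have "T p q = of_bool ((odd (a div 2 + p) \<noteq> odd (b div 2 + (q + b mod 2 + d) div 2)) = f)"
          if "p \<le> 1" for p q
          unfolding T_def 0 cS_0 cc[OF that] by simp
        then have q0: "T 0 0 + T 1 0 \<le> 1" and q1: "T 0 1 + T 1 1 \<le> 1" by auto
        show ?thesis using eq False 0 q0 q1 by simp
      next
        case (Suc j)
        have pair: "T p 0 + T p 1 \<le> Bf k (a div 2) p" if pp: "p \<le> 1" for p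
        proof -
          have t0: "T p 0 \<le> Bf k (a div 2) p" and t1: "T p 1 \<le> Bf k (a div 2) p"
            using IHT[of p 0] IHT[of p 1] that cc[OF that] by auto
          have P: "odd ((0 + b mod 2 + d) div 2 + ((p XOR 0) + D mod 2 + e) div 2 + ((1 + b mod 2 + d) div 2 + ((p XOR 1) + D mod 2 + e) div 2))"
            by (rule par_lemma[OF b2(1) b2(2) b2(3) Suc.prems(1) Suc.prems(2) Suc.prems(3) that False even_mod_lemma[OF par]])
          have "odd (a div 2 + b div 2 + p + (0 + b mod 2 + d) div 2 + D div 2 + ((p XOR 0) + D mod 2 + e) div 2) \<or>
                odd (a div 2 + b div 2 + p + (1 + b mod 2 + d) div 2 + D div 2 + ((p XOR 1) + D mod 2 + e) div 2)"
            by (rule odd_split[OF P])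
          moreover have "T p 0 = 0" if "odd (a div 2 + b div 2 + p + (0 + b mod 2 + d) div 2 + D div 2 + ((p XOR 0) + D mod 2 + e) div 2)"
            using cS_Suc_zero[OF that] unfolding T_def Suc cc[OF pp] .
          moreover have "T p 1 = 0" if "odd (a div 2 + b div 2 + p + (1 + b mod 2 + d) div 2 + D div 2 + ((p XOR 1) + D mod 2 + e) div 2)"
            using cS_Suc_zero[OF that] unfolding T_def Suc cc[OF pp] .
          ultimately have "T p 0 = 0 \<or> T p 1 = 0" by argo
          then show ?thesis using t0 t1 by auto
        qed
        show ?thesis using eq False pair[of 0] pair[of 1] by simp
      qed
    qed
  qed
qed

lemma cS_diag_zero: "s \<noteq> t \<Longrightarrow> s \<le> 1 \<Longrightarrow> t \<le> 1 \<Longrightarrow> card (cS k a a 0 s t 0 False) = 0"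
proof (cases k)
  case 0
  assume "s \<noteq> t" "s \<le> 1" "t \<le> 1"
  then have "s = 0 \<and> t = 1 \<or> s = 1 \<and> t = 0" by arith
  then show ?thesis unfolding 0 cS_0 by auto
next
  case (Suc j)
  assume "s \<noteq> t" "s \<le> 1" "t \<le> 1"
  then have "odd (a+a+s+t+0+0)" by presburger
  then show ?thesis unfolding Suc by (rule cS_Suc_zero)
qed

lemma cS_diag: "s \<le> 1 \<Longrightarrow> card (cS k a a 0 s s 0 False) = Bf k a s"
proof (induction k arbitrary: a s)
  case 0
  then show ?case by (simp add: cS_0)
next
  case (Suc k)
  have ev: "even (a+a+s+s+0+0)" by auto
  have e0: "((p XOR q) + 0 mod 2 + 0) div 2 = 0" if "p \<le> 1" "q \<le> 1" for p q :: nat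
    using xor_le1[OF that] by simp
  have eq: "card (cS (Suc k) a a 0 s s 0 False) =
     (\<Sum>p\<in>{0,1::nat}. \<Sum>q\<in>{0,1::nat}. card (cS k (a div 2) (a div 2) 0 ((p + a mod 2 + s) div 2)
        ((q + a mod 2 + s) div 2) 0 False))"
    unfolding cS_Suc if_P[OF ev] by (intro sum.cong refl) (auto simp: e0)
  show ?case
  proof (cases "a mod 2 = s")
    case True
    have cc: "(p + a mod 2 + s) div 2 = s" if "p \<in> {0,1}" for p
      using True that Suc.prems by auto
    have "card (cS (Suc k) a a 0 s s 0 False) =
     (\<Sum>p\<in>{0,1::nat}. \<Sum>q\<in>{0,1::nat}. card (cS k (a div 2) (a div 2) 0 s s 0 False))"
      unfolding eq by (intro sum.cong refl) (simp add: cc)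
    then show ?thesis using True Suc.IH[of s] Suc.prems by simp
  next
    case False
    have cc: "(p + a mod 2 + s) div 2 = p" if "p \<in> {0,1}" for p
      using False that Suc.prems by auto
    have "card (cS (Suc k) a a 0 s s 0 False) =
     (\<Sum>p\<in>{0,1::nat}. \<Sum>q\<in>{0,1::nat}. card (cS k (a div 2) (a div 2) 0 p q 0 False))"
      unfolding eq by (intro sum.cong refl) (simp add: cc)
    then show ?thesis using False Suc.IH[of 0] Suc.IH[of 1]
        cS_diag_zero[of 0 1 k "a div 2"] cS_diag_zero[of 1 0 k "a div 2"] by simp
  qed
qed

lemma split_top: "(x::nat) < 2^Suc m \<Longrightarrow> x = take_bit m x + of_bool (bit x m) * 2^m"
proof -
  assume a: "x < 2^Suc m"
  have "x div 2^m < 2" using a by (simp add: less_mult_imp_div_less)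
  then have "x div 2^m = 0 \<or> x div 2^m = 1" by auto
  then have "x div 2^m = of_bool (bit x m)" by (auto simp: bit_iff_odd)
  then show ?thesis using div_mult_mod_eq[of x "2^m"] by (simp add: take_bit_eq_mod)
qed

lemma rot_eq: "(W::nat) < 2^Suc m \<Longrightarrow> rotl (Suc m) 1 W = 2 * take_bit m W + of_bool (bit W m)"
proof -
  assume a: "W < 2^Suc m"
  have h: "W div 2^m = of_bool (bit W m)"
  proof -
    have "W div 2^m < 2" using a by (simp add: less_mult_imp_div_less)
    then have "W div 2^m = 0 \<or> W div 2^m = 1" by auto
    then show ?thesis by (auto simp: bit_iff_odd)
  qed
  have "W * 2 = 2 * take_bit m W + 2^Suc m * of_bool (bit W m)"
    using split_top[OF a] by (simp add: algebra_simps)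
  then have s1: "W * 2 + W div 2^m = (2 * take_bit m W + of_bool (bit W m)) + 2^Suc m * of_bool (bit W m)"
    using h by simp
  have "rotl (Suc m) 1 W = (W * 2 + W div 2^m) mod 2^Suc m" by (simp add: rotl_def)
  also have "\<dots> = (2 * take_bit m W + of_bool (bit W m) + 2^Suc m * of_bool (bit W m)) mod 2^Suc m"
    by (simp only: s1)
  also have "\<dots> = (2 * take_bit m W + of_bool (bit W m)) mod 2^Suc m" by (rule mod_mult_self2)
  also have "\<dots> = 2 * take_bit m W + of_bool (bit W m)"
  proof (rule mod_less)
    have t: "take_bit m W < 2^m" by simp
    have o: "of_bool (bit W m) \<le> (1::nat)" by simp
    have p: "2^Suc m = 2 * (2::nat)^m" by simp
    show "2 * take_bit m W + of_bool (bit W m) < 2^Suc m" using t o p by linarith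
  qed
  finally show ?thesis .
qed

lemma eqn:
  fixes Wl Ul g :: nat
  assumes "wb \<le> 1" "ub \<le> 1" "Wl < 2^m"
  shows "2 * Wl + wb = (2 * Ul + ub + g) mod 2^Suc m \<longleftrightarrow>
     (wb = (ub + g) mod 2 \<and> Wl = (Ul + g div 2 + (ub + g mod 2) div 2) mod 2^m)"
proof -
  define Z where "Z = Ul + g div 2 + (ub + g mod 2) div 2"
  have e1: "2 * Ul + ub + g = 2 * Z + (ub + g) mod 2" unfolding Z_def by presburger
  have "(2 * Z + (ub + g) mod 2) mod 2^Suc m = 2 * (Z mod 2^m) + (ub + g) mod 2"
    using mod_mult2_eq[of "2 * Z + (ub + g) mod 2" 2 "2^m"] by (simp add: mult.commute)
  then have "(2 * Ul + ub + g) mod 2^Suc m = 2 * (Z mod 2^m) + (ub + g) mod 2" using e1 by simp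
  moreover have "wb < 2" "(ub + g) mod 2 < 2" using assms by auto
  ultimately show ?thesis unfolding Z_def[symmetric]
    using two_rep_eq[of wb "(ub+g) mod 2" Wl "Z mod 2^m"] by (auto simp: mult.commute)
qed

lemma bit_add_top: "(x::nat) < 2^Suc m \<Longrightarrow> bit (x + a) m = (bit x m \<noteq> bit (take_bit m x + a) m)"
proof -
  assume a: "x < 2^Suc m"
  have xx: "x = take_bit m x + of_bool (bit x m) * 2^m" by (rule split_top[OF a])
  have "x + a = (take_bit m x + a) + of_bool (bit x m) * 2^m"
    using xx by linarith
  then have "(x + a) div 2^m = ((take_bit m x + a) + of_bool (bit x m) * 2^m) div 2^m"
    by (rule arg_cong[where f="\<lambda>z. z div 2^m"])
  also have "\<dots> = of_bool (bit x m) + (take_bit m x + a) div 2^m"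
    by (rule div_mult_self1) simp
  finally have "(x + a) div 2^m = of_bool (bit x m) + (take_bit m x + a) div 2^m" .
  then show ?thesis by (simp add: bit_iff_odd)
qed

lemma xor_lt: "(x::nat) < 2^n \<Longrightarrow> y < 2^n \<Longrightarrow> x XOR y < 2^n"
  by (metis take_bit_nat_eq_self_iff take_bit_xor take_bit_nat_less_exp)

lemma tb_add: "take_bit m (take_bit m (x::nat) + a) = take_bit m (x + a)"
  by (simp add: take_bit_eq_mod mod_add_left_eq)

lemma ob_mod2: "(of_bool Q + (g::nat)) mod 2 = of_bool (Q \<noteq> odd g)"
  by (cases Q) (auto simp: mod2_eq_if)
lemma ob_div2: "(of_bool Q + (g::nat) mod 2) div 2 = of_bool (odd g \<and> Q)"
  by (cases Q) (auto simp: mod2_eq_if)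

lemma cond_iff:
  assumes x: "x < 2^Suc m" and y: "y < 2^Suc m"
  shows "XR (Suc m) 1 (addm (Suc m) x \<alpha>) (addm (Suc m) y \<beta>) = addm (Suc m) (XR (Suc m) 1 x y) \<gamma> \<longleftrightarrow>
    (take_bit m x, take_bit m y) \<in> cS m \<alpha> \<beta> (\<gamma> div 2 + of_bool (odd \<gamma> \<and> bit x m \<noteq> bit y m)) 0 0 0 (odd \<gamma>)"
proof -
  define W where "W = addm (Suc m) x \<alpha> XOR addm (Suc m) y \<beta>"
  define U where "U = x XOR y"
  have W_eq: "W = take_bit (Suc m) ((x+\<alpha>) XOR (y+\<beta>))"
    unfolding W_def addm_def take_bit_eq_mod[symmetric] by simp
  have Wlt: "W < 2^Suc m" unfolding W_eq by (rule take_bit_nat_less_exp)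
  have Ult: "U < 2^Suc m" unfolding U_def using x y by (rule xor_lt)
  have tW: "take_bit m W = take_bit m ((x+\<alpha>) XOR (y+\<beta>))" unfolding W_eq by simp
  have bW: "bit W m = (bit (x+\<alpha>) m \<noteq> bit (y+\<beta>) m)" unfolding W_eq by (simp add: bit_take_bit_iff bit_xor_iff)
  have bU: "bit U m = (bit x m \<noteq> bit y m)" unfolding U_def by (simp add: bit_xor_iff)
  have lhs: "XR (Suc m) 1 (addm (Suc m) x \<alpha>) (addm (Suc m) y \<beta>) = 2 * take_bit m W + of_bool (bit W m)"
    unfolding XR_def W_def[symmetric] using rot_eq[OF Wlt] .
  have rhs: "addm (Suc m) (XR (Suc m) 1 x y) \<gamma> = (2 * take_bit m U + of_bool (bit U m) + \<gamma>) mod 2^Suc m"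
    unfolding XR_def U_def[symmetric] rot_eq[OF Ult] addm_def ..
  have E: "XR (Suc m) 1 (addm (Suc m) x \<alpha>) (addm (Suc m) y \<beta>) = addm (Suc m) (XR (Suc m) 1 x y) \<gamma> \<longleftrightarrow>
     (of_bool (bit W m) = (of_bool (bit U m) + \<gamma>) mod 2 \<and>
      take_bit m W = (take_bit m U + \<gamma> div 2 + (of_bool (bit U m) + \<gamma> mod 2) div 2) mod 2^m)"
    unfolding lhs rhs by (rule eqn) simp_all
  have c1: "(of_bool (bit W m) = (of_bool (bit U m) + \<gamma>) mod (2::nat)) \<longleftrightarrow>
      (bit (take_bit m x + \<alpha>) m \<noteq> bit (take_bit m y + \<beta>) m) = odd \<gamma>"
  proof -
    have "(of_bool (bit W m) = (of_bool (bit U m) + \<gamma>) mod (2::nat)) \<longleftrightarrow> (bit W m \<longleftrightarrow> (bit U m \<noteq> odd \<gamma>))"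
      unfolding ob_mod2 by simp
    also have "\<dots> \<longleftrightarrow> (bit (take_bit m x + \<alpha>) m \<noteq> bit (take_bit m y + \<beta>) m) = odd \<gamma>"
      unfolding bW bU bit_add_top[OF x] bit_add_top[OF y] by blast
    finally show ?thesis .
  qed
  have K: "(of_bool (bit U m) + \<gamma> mod 2) div 2 = of_bool (odd \<gamma> \<and> bit x m \<noteq> bit y m)"
    unfolding bU ob_div2 by auto
  have c2a: "take_bit m ((take_bit m x + \<alpha> + 0) XOR (take_bit m y + \<beta> + 0)) = take_bit m W"
    unfolding tW by (simp add: tb_add)
  define K' where "K' = \<gamma> div 2 + of_bool (odd \<gamma> \<and> bit x m \<noteq> bit y m)"
  have c2b1: "take_bit m ((take_bit m x XOR take_bit m y) + K' + 0) = take_bit m (U + K')"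
  proof -
    have xy: "take_bit m x XOR take_bit m y = take_bit m U" unfolding U_def by simp
    show ?thesis by (simp only: xy tb_add add_0_right)
  qed
  have c2b2: "(take_bit m U + \<gamma> div 2 + (of_bool (bit U m) + \<gamma> mod 2) div 2) mod 2^m = take_bit m (U + K')"
  proof -
    have "(take_bit m U + \<gamma> div 2 + (of_bool (bit U m) + \<gamma> mod 2) div 2) = take_bit m U + K'"
      unfolding K K'_def by simp
    then show ?thesis by (simp only: take_bit_eq_mod[symmetric] tb_add)
  qed
  have c2b: "take_bit m ((take_bit m x XOR take_bit m y) + (\<gamma> div 2 + of_bool (odd \<gamma> \<and> bit x m \<noteq> bit y m)) + 0)
     = (take_bit m U + \<gamma> div 2 + (of_bool (bit U m) + \<gamma> mod 2) div 2) mod 2^m"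
    using c2b1 c2b2 unfolding K'_def by simp
  have c3: "bit ((take_bit m x + \<alpha> + 0) XOR (take_bit m y + \<beta> + 0)) m = (bit (take_bit m x + \<alpha>) m \<noteq> bit (take_bit m y + \<beta>) m)"
    by (simp add: bit_xor_iff)
  show ?thesis
    unfolding E cS_def mem_Collect_eq prod.case c2a c2b c3 c1 by auto
qed

definition Cset :: "nat \<Rightarrow> nat \<Rightarrow> nat \<Rightarrow> nat \<Rightarrow> (nat \<times> nat) set" where
  "Cset n \<alpha> \<beta> \<gamma> = {(x, y). x \<in> words n \<and> y \<in> words n \<and>
        XR n 1 (addm n x \<alpha>) (addm n y \<beta>) = addm n (XR n 1 x y) \<gamma>}"

lemma adpXR_Cset: "adpXR n 1 \<alpha> \<beta> \<gamma> = real (card (Cset n \<alpha> \<beta> \<gamma>)) / 2 ^ (2 * n)"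
  unfolding adpXR_def adp2_def Cset_def ..

lemma recomb:
  assumes "(u::nat) < 2^m"
  shows "take_bit m (u + of_bool p * 2^m) = u" "bit (u + of_bool p * 2^m) m = p"
    "u + of_bool p * 2^m < 2^Suc m"
proof -
  show "take_bit m (u + of_bool p * 2^m) = u" using assms by (simp add: take_bit_eq_mod)
  have "(u + of_bool p * 2^m) div 2^m = of_bool p + u div 2^m"
    by (rule div_mult_self1) simp
  then show "bit (u + of_bool p * 2^m) m = p" using assms by (simp add: bit_iff_odd)
  show "u + of_bool p * 2^m < 2^Suc m" using assms by (cases p) auto
qed

lemma card_Cset: "card (Cset (Suc m) \<alpha> \<beta> \<gamma>) =
   (\<Sum>z\<in>(UNIV::(bool\<times>bool) set). card (cS m \<alpha> \<beta> (\<gamma> div 2 + of_bool (odd \<gamma> \<and> fst z \<noteq> snd z)) 0 0 0 (odd \<gamma>)))"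
proof -
  define F where "F = (\<lambda>z::bool\<times>bool. cS m \<alpha> \<beta> (\<gamma> div 2 + of_bool (odd \<gamma> \<and> fst z \<noteq> snd z)) 0 0 0 (odd \<gamma>))"
  have mem: "(x,y) \<in> Cset (Suc m) \<alpha> \<beta> \<gamma> \<longleftrightarrow> x < 2^Suc m \<and> y < 2^Suc m \<and>
      (take_bit m x, take_bit m y) \<in> F (bit x m, bit y m)" for x y
    unfolding Cset_def F_def words_def using cond_iff[of x m y] by auto
  have Flt: "u < 2^m \<and> v < 2^m" if "(u,v) \<in> F z" for u v z
    using that unfolding F_def cS_def by auto
  have bij: "bij_betw (\<lambda>(x,y). ((bit x m, bit y m), (take_bit m x, take_bit m y))) (Cset (Suc m) \<alpha> \<beta> \<gamma>)
     (Sigma UNIV F)"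
  proof (rule bij_betw_byWitness[where f'="\<lambda>((p,q),(u,v)). (u + of_bool p * 2^m, v + of_bool q * 2^m)"])
    show "\<forall>a\<in>Cset (Suc m) \<alpha> \<beta> \<gamma>. (\<lambda>((p,q),(u,v)). (u + of_bool p * 2^m, v + of_bool q * 2^m))
          ((\<lambda>(x,y). ((bit x m, bit y m), (take_bit m x, take_bit m y))) a) = a"
      using mem split_top by auto
    show "\<forall>a\<in>Sigma UNIV F. (\<lambda>(x,y). ((bit x m, bit y m), (take_bit m x, take_bit m y)))
          ((\<lambda>((p,q),(u,v)). (u + of_bool p * 2^m, v + of_bool q * 2^m)) a) = a"
    proof
      fix a assume "a \<in> Sigma UNIV F"
      then obtain p q u v where a: "a = ((p,q),(u,v))" and uv: "(u,v) \<in> F (p,q)" by auto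
      have lt: "u < 2^m" "v < 2^m" using Flt[OF uv] by auto
      show "(\<lambda>(x,y). ((bit x m, bit y m), (take_bit m x, take_bit m y)))
          ((\<lambda>((p,q),(u,v)). (u + of_bool p * 2^m, v + of_bool q * 2^m)) a) = a"
        unfolding a using recomb[OF lt(1), of p] recomb[OF lt(2), of q] by simp
    qed
    show "(\<lambda>(x,y). ((bit x m, bit y m), (take_bit m x, take_bit m y))) ` Cset (Suc m) \<alpha> \<beta> \<gamma> \<subseteq> Sigma UNIV F"
      using mem by auto
    show "(\<lambda>((p,q),(u,v)). (u + of_bool p * 2^m, v + of_bool q * 2^m)) ` Sigma UNIV F \<subseteq> Cset (Suc m) \<alpha> \<beta> \<gamma>"
    proof
      fix w assume "w \<in> (\<lambda>((p,q),(u,v)). (u + of_bool p * 2^m, v + of_bool q * 2^m)) ` Sigma UNIV F"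
      then obtain p q u v where w: "w = (u + of_bool p * 2^m, v + of_bool q * 2^m)" and uv: "(u,v) \<in> F (p,q)"
        by auto
      have lt: "u < 2^m" "v < 2^m" using Flt[OF uv] by auto
      show "w \<in> Cset (Suc m) \<alpha> \<beta> \<gamma>"
        unfolding w mem recomb(1,2)[OF lt(1)] recomb(1,2)[OF lt(2)]
        using uv recomb(3)[OF lt(1), of p] recomb(3)[OF lt(2), of q] by blast
    qed
  qed
  have "card (Cset (Suc m) \<alpha> \<beta> \<gamma>) = card (Sigma UNIV F)" using bij_betw_same_card[OF bij] .
  also have "\<dots> = (\<Sum>z\<in>UNIV. card (F z))"
    by (rule card_SigmaI) (auto simp: F_def cS_finite)
  finally show ?thesis unfolding F_def .
qed

lemma card_UNIV_bb: "card (UNIV :: (bool \<times> bool) set) = 4"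
  by (simp add: UNIV_Times_UNIV[symmetric] card_cartesian_product del: UNIV_Times_UNIV)

lemma Cset_le: "card (Cset (Suc m) \<alpha> \<beta> \<gamma>) \<le> 4 * Bf m \<alpha> 0"
proof -
  have "card (Cset (Suc m) \<alpha> \<beta> \<gamma>) \<le> of_nat (card (UNIV :: (bool \<times> bool) set)) * Bf m \<alpha> 0"
    unfolding card_Cset by (rule sum_bounded_above) (rule cS_bound, simp_all)
  then show ?thesis by (simp add: card_UNIV_bb)
qed

lemma Cset_diag: "card (Cset (Suc m) \<alpha> \<alpha> 0) = 4 * Bf m \<alpha> 0"
  unfolding card_Cset using cS_diag[of 0 m \<alpha>] by (simp add: card_UNIV_bb)

theorem theorem6:
  fixes n \<alpha> :: nat
  assumes "n \<ge> 2" and "\<alpha> \<in> words n"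
  shows "Max ((\<lambda>(\<beta>, \<gamma>). adpXR n 1 \<alpha> \<beta> \<gamma>) ` (words n \<times> words n))
         = adpXR n 1 \<alpha> \<alpha> 0"
proof -
  obtain m where n: "n = Suc m" using assms(1) by (cases n) auto
  show ?thesis
  proof (rule Max_eqI)
    show "finite ((\<lambda>(\<beta>, \<gamma>). adpXR n 1 \<alpha> \<beta> \<gamma>) ` (words n \<times> words n))"
      by (simp add: words_def)
    show "adpXR n 1 \<alpha> \<alpha> 0 \<in> (\<lambda>(\<beta>, \<gamma>). adpXR n 1 \<alpha> \<beta> \<gamma>) ` (words n \<times> words n)"
    proof -
      have "(\<alpha>, 0) \<in> words n \<times> words n" using assms(2) by (simp add: words_def)
      then show ?thesis by force
    qed
    fix r assume "r \<in> (\<lambda>(\<beta>, \<gamma>). adpXR n 1 \<alpha> \<beta> \<gamma>) ` (words n \<times> words n)"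
    then obtain \<beta> \<gamma> where r: "r = adpXR n 1 \<alpha> \<beta> \<gamma>" by auto
    have "card (Cset n \<alpha> \<beta> \<gamma>) \<le> card (Cset n \<alpha> \<alpha> 0)"
      unfolding n using Cset_le[of m \<alpha> \<beta> \<gamma>] Cset_diag[of m \<alpha>] by simp
    then show "r \<le> adpXR n 1 \<alpha> \<alpha> 0"
      unfolding r adpXR_Cset by (simp add: divide_right_mono)
  qed
qed

end
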